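(* Let $a\ge2$, $d\ge1$ and $s$ be integers with $\gcd(a,d)=1$ and $1\le s<a$, and put $b=a+sd$. Let $\mathit{NR}$ be the set of positive integers not representable as $\sum_{i=0}^s(a+id)x_i$ with $x_0,\dots,x_s$ nonnegative integers, and let $S_m=\sum_{n\in\mathit{NR}}n^m$. Then, as an identity of functions (equivalently of power series about $z=0$), \[ \sum_{m=0}^\infty S_m\frac{z^m}{m!}=\frac{e^{\lceil\frac{b-1}{s}\rceil az}-1}{(e^{dz}-1)(e^{az}-1)}+\frac{e^{\lceil\frac{a-1}{s}\rceil bz}-1}{(e^{-dz}-1)(e^{bz}-1)}-\frac{1}{e^z-1}. \]
   Context: $\lceil x\rceil$ is the least integer not less than $x$. *)

theory Defs
  imports "HOL-Analysis.Analysis"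
begin

definition NR :: "nat \<Rightarrow> nat \<Rightarrow> nat \<Rightarrow> nat set" where
  "NR a d s = {n. 0 < n \<and> \<not> (\<exists>x :: nat \<Rightarrow> nat. n = (\<Sum>i\<le>s. (a + i * d) * x i))}"

definition S :: "nat \<Rightarrow> nat \<Rightarrow> nat \<Rightarrow> nat \<Rightarrow> nat" where
  "S a d s m = (\<Sum>n\<in>NR a d s. n ^ m)"

end

theory Submission
  imports Defs
begin

lemma rep_char:
  fixes a d s n :: nat
  assumes s1: "1 \<le> s"
  shows "(\<exists>x::nat\<Rightarrow>nat. n = (\<Sum>i\<le>s. (a + i * d) * x i)) \<longleftrightarrow> (\<exists>k j. n = k * a + j * d \<and> j \<le> k* s)"
proof
  assume "\<exists>x::nat\<Rightarrow>nat. n = (\<Sum>i\<le>s. (a + i * d) * x i)"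
  then obtain x :: "nat\<Rightarrow>nat" where x: "n = (\<Sum>i\<le>s. (a + i * d) * x i)" by blast
  have "n = (\<Sum>i\<le>s. x i * a + (i * x i) * d)"
    unfolding x by (rule sum.cong) (simp_all add: algebra_simps)
  also have "\<dots> = (\<Sum>i\<le>s. x i) * a + (\<Sum>i\<le>s. i * x i) * d"
    by (simp add: sum.distrib sum_distrib_right)
  finally have "n = (\<Sum>i\<le>s. x i) * a + (\<Sum>i\<le>s. i * x i) * d" .
  moreover have "(\<Sum>i\<le>s. i * x i) \<le> (\<Sum>i\<le>s. x i) * s"
    unfolding sum_distrib_right by (rule sum_mono) (simp add: mult.commute)
  ultimately show "\<exists>k j. n = k * a + j * d \<and> j \<le> k* s" by blast
next
  assume "\<exists>k j. n = k * a + j * d \<and> j \<le> k* s"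
  then obtain k j where n: "n = k * a + j * d" and jk: "j \<le> k* s" by blast
  define u where "u = j div s"
  define v where "v = j mod s"
  have j: "j = s * u + v" unfolding u_def v_def by simp
  have vs: "v < s" unfolding v_def using s1 by simp
  show "\<exists>x::nat\<Rightarrow>nat. n = (\<Sum>i\<le>s. (a + i * d) * x i)"
  proof (cases "v = 0")
    case True
    have uk: "u \<le> k" using jk j True s1
      using jk j True s1 by (simp add: mult.commute[of k s])
    let ?x = "\<lambda>i. (if i = 0 then k - u else 0) + (if i = s then u else 0)"
    have "(\<Sum>i\<le>s. (a + i * d) * ?x i) = (\<Sum>i\<le>s. (if i = 0 then a * (k-u) else 0) + (if i = s then (a+s * d) * u else 0))"
      by (rule sum.cong) (auto simp: algebra_simps)
    also have "\<dots> = a * (k-u) + (a+s * d) * u" by (simp add: sum.distrib)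
    also have "\<dots> = n"
    proof -
      obtain w where "k = u + w" using uk le_Suc_ex by blast
      then show ?thesis using n j True by (simp add: algebra_simps)
    qed
    finally have "n = (\<Sum>i\<le>s. (a + i * d) * ?x i)" by (rule sym)
    then show ?thesis by (rule exI[where x="?x"])
  next
    case False
    have uk: "u < k" using jk j False s1
    proof -
      have "s * u + v \<le> s * k" using jk j by (simp add: mult.commute[of k s])
      then have "s * u < s * k" using False by linarith
      then show ?thesis by simp
    qed
    let ?x = "\<lambda>i. (if i = 0 then k - u - 1 else 0) + (if i = v then 1 else 0) + (if i = s then u else 0)"
    have "(\<Sum>i\<le>s. (a + i * d) * ?x i) = (\<Sum>i\<le>s. (if i = 0 then a * (k-u-1) else 0) + (if i = v then a + v * d else 0) + (if i = s then (a+s * d) * u else 0))"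
      by (rule sum.cong) (use False vs in \<open>auto simp: algebra_simps\<close>)
    also have "\<dots> = a * (k-u-1) + (a + v * d) + (a+s * d) * u" using vs by (simp add: sum.distrib)
    also have "\<dots> = n"
    proof -
      obtain w where "k = u + 1 + w" using uk by (metis Suc_eq_plus1 less_iff_Suc_add add.commute add.left_commute)
      then show ?thesis using n j by (simp add: algebra_simps)
    qed
    finally have "n = (\<Sum>i\<le>s. (a + i * d) * ?x i)" by (rule sym)
    then show ?thesis by (rule exI[where x="?x"])
  qed
qed

lemma ceil_le:
  fixes j s K :: nat
  assumes "j \<le> s * K" "1 \<le> s"
  shows "(j + s - 1) div s \<le> K"
proof -
  have "(j + s - 1) div s \<le> (s * K + (s - 1)) div s"
    using assms by (intro div_le_mono) linarith
  also have "\<dots> = K" using assms by (intro div_nat_eqI) auto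
  finally show ?thesis .
qed

lemma ceil_ge:
  fixes j s :: nat
  assumes "1 \<le> s"
  shows "j \<le> s * ((j + s - 1) div s)"
proof -
  have "s * ((j + s - 1) div s) = (j + s - 1) - (j + s - 1) mod s"
    by (simp add: minus_mod_eq_mult_div)
  moreover have "(j + s - 1) mod s < s" using assms by simp
  ultimately show ?thesis using assms by linarith
qed

lemma cancel_mod:
  fixes a d j j' :: nat
  assumes "coprime a d" "(j' * d) mod a = (j * d) mod a"
  shows "j' mod a = j mod a"
proof -
  have "int ((j' * d) mod a) = int ((j * d) mod a)" using assms(2) by simp
  then have "int (j' * d) mod int a = int (j * d) mod int a" unfolding of_nat_mod .
  then have "int a dvd int (j' * d) - int (j * d)" by (simp only: mod_eq_dvd_iff)
  moreover have "int (j' * d) - int (j * d) = (int j' - int j) * int d" by (simp add: algebra_simps)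
  ultimately have "int a dvd (int j' - int j) * int d" by simp
  moreover have "coprime (int a) (int d)" using assms(1) by simp
  ultimately have "int a dvd (int j' - int j)"
    using coprime_dvd_mult_left_iff by blast
  then have "int j' mod int a = int j mod int a" by (simp only: mod_eq_dvd_iff)
  then have "int (j' mod a) = int (j mod a)" unfolding of_nat_mod .
  then show ?thesis by simp
qed

lemma rep_iff:
  fixes a d s n j :: nat
  assumes cop: "coprime a d" and s1: "1 \<le> s" and ja: "j < a" and jn: "(j * d) mod a = n mod a"
  shows "(\<exists>k j'. n = k * a + j' * d \<and> j' \<le> k * s) \<longleftrightarrow> j * d + a * ((j + s - 1) div s) \<le> n"
proof
  assume "\<exists>k j'. n = k * a + j' * d \<and> j' \<le> k * s"
  then obtain k j' where n: "n = k * a + j' * d" and jk: "j' \<le> k * s" by blast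
  have "n mod a = (j' * d) mod a" unfolding n by simp
  then have jj: "(j' * d) mod a = (j * d) mod a" using jn by simp
  have "j' mod a = j" using cancel_mod[OF cop jj] ja by simp
  then have "j' = j + a * (j' div a)" using mod_mult_div_eq[of j' a] by simp
  then obtain t where j': "j' = j + a * t" by blast
  have "j \<le> j'" using j' by simp
  moreover have "j' \<le> s * k" using jk by (simp add: mult.commute)
  moreover have "s * k \<le> s * (k + t * d)" by simp
  ultimately have "j \<le> s * (k + t * d)" by linarith
  then have "(j + s - 1) div s \<le> k + t * d" using ceil_le s1 by blast
  then have "a * ((j + s - 1) div s) \<le> a * (k + t * d)" by simp
  moreover have "n = j * d + a * (k + t * d)" unfolding n j' by (simp add: algebra_simps)
  ultimately show "j * d + a * ((j + s - 1) div s) \<le> n" by linarith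
next
  assume le: "j * d + a * ((j + s - 1) div s) \<le> n"
  define c where "c = (j + s - 1) div s"
  have jdn: "j * d \<le> n" using le by linarith
  have "n mod a = j * d mod a" using jn by simp
  then have "a dvd n - j * d" using mod_eq_dvd_iff_nat[OF jdn] by blast
  then obtain K where K: "n - j * d = a * K" by blast
  have "a * c \<le> a * K" using K le unfolding c_def by linarith
  then have cK: "c \<le> K" using ja by simp
  have "j \<le> s * c" unfolding c_def using ceil_ge s1 by blast
  also have "\<dots> \<le> s * K" using cK by simp
  finally have "j \<le> K * s" by (simp add: mult.commute)
  moreover have "n = K * a + j * d" using K jdn by (simp add: mult.commute)
  ultimately show "\<exists>k j'. n = k * a + j' * d \<and> j' \<le> k * s" by blast
qed

lemma exists_j:
  fixes a d n :: nat
  assumes cop: "coprime a d" and a1: "1 \<le> a"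
  shows "\<exists>j<a. (j * d) mod a = n mod a"
proof -
  let ?f = "\<lambda>j. (j * d) mod a"
  have inj: "inj_on ?f {..<a}"
  proof (rule inj_onI)
    fix x y assume xy: "x \<in> {..<a}" "y \<in> {..<a}" and e: "(x * d) mod a = (y * d) mod a"
    have "x mod a = y mod a" by (rule cancel_mod[OF cop e])
    then show "x = y" using xy by simp
  qed
  have sub: "?f ` {..<a} \<subseteq> {..<a}"
  proof (rule image_subsetI)
    fix j show "(j * d) mod a \<in> {..<a}" using a1 by simp
  qed
  have surj: "?f ` {..<a} = {..<a}" by (rule endo_inj_surj[OF _ sub inj]) simp
  have nm: "n mod a \<in> {..<a}" using a1 by simp
  have "n mod a \<in> ?f ` {..<a}" unfolding surj by (rule nm)
  then obtain j where "j \<in> {..<a}" "n mod a = (j * d) mod a" by (rule imageE)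
  then show ?thesis by auto
qed

lemma perm_mod:
  fixes a d :: nat
  assumes cop: "coprime a d" and a2: "2 \<le> a"
  shows "(\<lambda>j. (j * d) mod a) ` {1..<a} = {1..<a}" and "inj_on (\<lambda>j. (j * d) mod a) {1..<a}"
proof -
  let ?f = "\<lambda>j. (j * d) mod a"
  show inj: "inj_on ?f {1..<a}"
  proof (rule inj_onI)
    fix x y assume xy: "x \<in> {1..<a}" "y \<in> {1..<a}" and e: "(x * d) mod a = (y * d) mod a"
    have "x mod a = y mod a" by (rule cancel_mod[OF cop e])
    then show "x = y" using xy by simp
  qed
  have "?f ` {1..<a} \<subseteq> {1..<a}"
  proof
    fix r assume "r \<in> ?f ` {1..<a}"
    then obtain j where j: "j \<in> {1..<a}" and r: "r = (j * d) mod a" by blast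
    have "r < a" using r a2 by simp
    moreover have "r \<noteq> 0"
    proof
      assume "r = 0"
      then have "a dvd j * d" using r by (simp add: mod_eq_0_iff_dvd)
      then have "a dvd j" using coprime_dvd_mult_left_iff[OF cop] by simp
      then show False using j dvd_imp_le[of a j] by simp
    qed
    ultimately show "r \<in> {1..<a}" by simp
  qed
  note sub2 = this
  show "?f ` {1..<a} = {1..<a}" by (rule endo_inj_surj[OF _ sub2 inj]) simp
qed

lemma NR_eq:
  fixes a d s :: nat
  assumes a2: "2 \<le> a" and cop: "coprime a d" and s1: "1 \<le> s"
  shows "NR a d s = (\<Union>j\<in>{1..<a}. (\<lambda>l. j * d mod a + l * a) ` {..< j * d div a + (j + s - 1) div s})"
proof (rule set_eqI, rule iffI)
  fix n assume "n \<in> NR a d s"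
  then have n0: "0 < n" and nr: "\<not> (\<exists>k j. n = k * a + j * d \<and> j \<le> k * s)"
    unfolding NR_def using rep_char[OF s1] by auto
  obtain j where ja: "j < a" and jn: "(j * d) mod a = n mod a" using exists_j[OF cop] a2 by fastforce
  define c where "c = (j + s - 1) div s"
  have "\<not> (j * d + a * c \<le> n)" using rep_iff[OF cop s1 ja jn] nr unfolding c_def by blast
  then have lt: "n < j * d + a * c" by linarith
  have j0: "j \<noteq> 0"
  proof
    assume "j = 0"
    then have "c = 0" using s1 unfolding c_def by simp
    then show False using lt \<open>j = 0\<close> by simp
  qed
  have nsplit: "n = j * d mod a + (n div a) * a" using jn mod_div_mult_eq[of n a] by simp
  have jsplit: "j * d + a * c = j * d mod a + (j * d div a + c) * a"
    using mod_div_mult_eq[of "j * d" a] by (simp add: algebra_simps)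
  have "(n div a) * a < (j * d div a + c) * a" using lt nsplit jsplit by linarith
  then have "n div a < j * d div a + c" by simp
  then have "n \<in> (\<lambda>l. j * d mod a + l * a) ` {..< j * d div a + c}" using nsplit by auto
  then show "n \<in> (\<Union>j\<in>{1..<a}. (\<lambda>l. j * d mod a + l * a) ` {..< j * d div a + (j + s - 1) div s})"
    using ja j0 unfolding c_def by auto
next
  fix n assume "n \<in> (\<Union>j\<in>{1..<a}. (\<lambda>l. j * d mod a + l * a) ` {..< j * d div a + (j + s - 1) div s})"
  then obtain j l where j: "j \<in> {1..<a}" and l: "l < j * d div a + (j + s - 1) div s"
    and n: "n = j * d mod a + l * a" by auto
  define c where "c = (j + s - 1) div s"
  have ja: "j < a" using j by simp
  have jn: "(j * d) mod a = n mod a" using n by simp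
  have jsplit: "j * d + a * c = j * d mod a + (j * d div a + c) * a"
    using mod_div_mult_eq[of "j * d" a] by (simp add: algebra_simps)
  have "l * a < (j * d div a + c) * a" using l a2 unfolding c_def by simp
  then have "n < j * d + a * c" using n jsplit by linarith
  then have "\<not> (j * d + a * c \<le> n)" by linarith
  then have nr: "\<not> (\<exists>k j. n = k * a + j * d \<and> j \<le> k * s)"
    using rep_iff[OF cop s1 ja jn] unfolding c_def by blast
  have "j * d mod a \<in> {1..<a}" using perm_mod(1)[OF cop a2] j by blast
  then have "0 < n" using n by simp
  then show "n \<in> NR a d s" unfolding NR_def using rep_char[OF s1] nr by auto
qed

lemma sum_NR:
  fixes a d s :: nat and x :: "'a::comm_ring_1"
  assumes a2: "2 \<le> a" and cop: "coprime a d" and s1: "1 \<le> s"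
  shows "(x ^ a - 1) * (\<Sum>n\<in>NR a d s. x ^ n)
    = (\<Sum>j\<in>{1..<a}. x ^ (j * d + a * ((j + s - 1) div s))) - (\<Sum>j\<in>{1..<a}. x ^ j)"
proof -
  define L where "L j = j * d div a + (j + s - 1) div s" for j
  define A where "A j = (\<lambda>l. j * d mod a + l * a) ` {..< L j}" for j
  have NR: "NR a d s = (\<Union>j\<in>{1..<a}. A j)" unfolding A_def L_def using NR_eq[OF a2 cop s1] by simp
  have disj: "\<forall>i\<in>{1..<a}. \<forall>j\<in>{1..<a}. i \<noteq> j \<longrightarrow> A i \<inter> A j = {}"
  proof (intro ballI impI)
    fix i j assume i: "i \<in> {1..<a}" and j: "j \<in> {1..<a}" and ij: "i \<noteq> j"
    show "A i \<inter> A j = {}"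
    proof (rule ccontr)
      assume "A i \<inter> A j \<noteq> {}"
      then obtain l l' where "i * d mod a + l * a = j * d mod a + l' * a" unfolding A_def by blast
      then have "(i * d mod a + l * a) mod a = (j * d mod a + l' * a) mod a" by simp
      then have "(i * d) mod a = (j * d) mod a" by simp
      then have "i mod a = j mod a" using cancel_mod[OF cop] by blast
      then show False using i j ij by simp
    qed
  qed
  have "(\<Sum>n\<in>NR a d s. x ^ n) = (\<Sum>j\<in>{1..<a}. \<Sum>n\<in>A j. x ^ n)"
    unfolding NR by (rule sum.UNION_disjoint) (use disj in \<open>auto simp: A_def\<close>)
  also have "\<dots> = (\<Sum>j\<in>{1..<a}. x ^ (j * d mod a) * (\<Sum>l<L j. (x ^ a) ^ l))"
  proof (rule sum.cong)
    fix j assume "j \<in> {1..<a}"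
    have inj: "inj_on (\<lambda>l. j * d mod a + l * a) {..< L j}" using a2 by (intro inj_onI) simp
    have "(\<Sum>n\<in>A j. x ^ n) = (\<Sum>l<L j. x ^ (j * d mod a + l * a))"
      unfolding A_def by (simp add: sum.reindex[OF inj])
    also have "\<dots> = (\<Sum>l<L j. x ^ (j * d mod a) * (x ^ a) ^ l)"
      by (simp add: power_add power_mult mult.commute[of _ a])
    finally show "(\<Sum>n\<in>A j. x ^ n) = x ^ (j * d mod a) * (\<Sum>l<L j. (x ^ a) ^ l)"
      by (simp add: sum_distrib_left)
  qed simp
  finally have "(x ^ a - 1) * (\<Sum>n\<in>NR a d s. x ^ n)
     = (\<Sum>j\<in>{1..<a}. x ^ (j * d mod a) * ((x ^ a - 1) * (\<Sum>l<L j. (x ^ a) ^ l)))"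
    by (simp add: sum_distrib_left algebra_simps)
  also have "\<dots> = (\<Sum>j\<in>{1..<a}. x ^ (j * d + a * ((j + s - 1) div s)) - x ^ (j * d mod a))"
  proof (rule sum.cong)
    fix j assume "j \<in> {1..<a}"
    have e: "j * d mod a + a * L j = j * d + a * ((j + s - 1) div s)"
      unfolding L_def using mod_div_mult_eq[of "j * d" a] by (simp add: algebra_simps)
    have "x ^ (j * d mod a) * ((x ^ a - 1) * (\<Sum>l<L j. (x ^ a) ^ l))
        = x ^ (j * d mod a) * ((x ^ a) ^ L j - 1)"
      by (simp add: power_diff_1_eq)
    also have "\<dots> = x ^ (j * d mod a + a * L j) - x ^ (j * d mod a)"
      by (simp add: power_add power_mult algebra_simps)
    finally show "x ^ (j * d mod a) * ((x ^ a - 1) * (\<Sum>l<L j. (x ^ a) ^ l))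
        = x ^ (j * d + a * ((j + s - 1) div s)) - x ^ (j * d mod a)" unfolding e .
  qed simp
  also have "\<dots> = (\<Sum>j\<in>{1..<a}. x ^ (j * d + a * ((j + s - 1) div s))) - (\<Sum>j\<in>{1..<a}. x ^ (j * d mod a))"
    by (simp add: sum_subtractf)
  also have "(\<Sum>j\<in>{1..<a}. x ^ (j * d mod a)) = (\<Sum>j\<in>{1..<a}. x ^ j)"
  proof -
    have "(\<Sum>j\<in>{1..<a}. x ^ j) = (\<Sum>j\<in>(\<lambda>j. (j * d) mod a) ` {1..<a}. x ^ j)"
      using perm_mod(1)[OF cop a2] by simp
    also have "\<dots> = (\<Sum>j\<in>{1..<a}. x ^ (j * d mod a))"
      by (simp only: sum.reindex[OF perm_mod(2)[OF cop a2]] o_def)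
    finally show ?thesis by simp
  qed
  finally show ?thesis .
qed

lemma ceil_step:
  fixes N s :: nat
  assumes s1: "1 \<le> s"
  shows "(N mod s = 0 \<and> (Suc N + s - 1) div s = (N + s - 1) div s + 1 \<and> N = s * ((N + s - 1) div s))
       \<or> ((Suc N + s - 1) div s = (N + s - 1) div s)"
proof -
  define q where "q = N div s"
  define r where "r = N mod s"
  have N: "N = s * q + r" unfolding q_def r_def by simp
  have rs: "r < s" unfolding r_def using s1 by simp
  have "Suc N + s - 1 = r + (q + 1) * s" using N s1 by (simp add: algebra_simps)
  then have A: "(Suc N + s - 1) div s = q + 1" using rs by simp
  show ?thesis
  proof (cases "r = 0")
    case True
    have l1: "s * q \<le> N + s - 1" using N True s1 by simp
    have l2: "N + s - 1 < s * Suc q" using N True s1 by simp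
    have "(N + s - 1) div s = q" using l1 l2 by (rule div_nat_eqI)
    moreover have "N mod s = 0" using True unfolding r_def .
    moreover have "N = s * q" using N True by simp
    ultimately show ?thesis using A by simp
  next
    case False
    have l1: "s * (q + 1) \<le> N + s - 1" using N False s1 by simp
    have l2: "N + s - 1 < s * Suc (q + 1)" using N rs s1 by simp
    have "(N + s - 1) div s = q + 1" using l1 l2 by (rule div_nat_eqI)
    then show ?thesis using A by simp
  qed
qed

lemma T_ind:
  fixes x :: "'a::comm_ring_1" and a d s N :: nat
  assumes s1: "1 \<le> s"
  shows "(x ^ d - 1) * (\<Sum>j\<le>N. x ^ (j * d + a * ((j + s - 1) div s)))
    = x ^ ((N + 1) * d + a * ((N + s - 1) div s)) - 1
      - x ^ d * (x ^ a - 1) * (\<Sum>t<(N + s - 1) div s. x ^ (t * (a + s * d)))"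
proof (induction N)
  case 0
  have "(s - 1) div s = 0" using s1 by simp
  then show ?case by simp
next
  case (Suc N)
  define c where "c = (N + s - 1) div s"
  define S where "S = (\<Sum>j\<le>N. x ^ (j * d + a * ((j + s - 1) div s)))"
  define G where "G = (\<Sum>t<c. x ^ (t * (a + s * d)))"
  have IH: "(x ^ d - 1) * S = x ^ ((N + 1) * d + a * c) - 1 - x ^ d * (x ^ a - 1) * G"
    using Suc.IH unfolding S_def G_def c_def .
  have LS: "(\<Sum>j\<le>Suc N. x ^ (j * d + a * ((j + s - 1) div s))) = S + x ^ (Suc N * d + a * ((Suc N + s - 1) div s))"
    unfolding S_def by simp
  from ceil_step[OF s1, of N] show ?case
  proof
    assume H: "N mod s = 0 \<and> (Suc N + s - 1) div s = (N + s - 1) div s + 1 \<and> N = s * ((N + s - 1) div s)"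
    then have c1: "(Suc N + s - 1) div s = c + 1" and Nc: "N = s * c" unfolding c_def by auto
    have G1: "(\<Sum>t<c + 1. x ^ (t * (a + s * d))) = G + x ^ (c * (a + s * d))" unfolding G_def by simp
    have e1: "x ^ ((N + 1) * d + a * c) = x ^ d * x ^ (c * (a + s * d))"
    proof -
      have E: "(N + 1) * d + a * c = d + c * (a + s * d)" unfolding Nc by (simp add: algebra_simps)
      show ?thesis unfolding E by (rule power_add)
    qed
    have e2: "x ^ (Suc N * d + a * (c + 1)) = x ^ d * x ^ (c * (a + s * d)) * x ^ a"
    proof -
      have E: "Suc N * d + a * (c + 1) = d + c * (a + s * d) + a" unfolding Nc by (simp add: algebra_simps)
      show ?thesis unfolding E by (simp only: power_add)
    qed
    have e3: "x ^ ((Suc N + 1) * d + a * (c + 1)) = x ^ d * x ^ (Suc N * d + a * (c + 1))"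
    proof -
      have E: "(Suc N + 1) * d + a * (c + 1) = d + (Suc N * d + a * (c + 1))" by (simp add: algebra_simps)
      show ?thesis unfolding E by (rule power_add)
    qed
    show ?case unfolding LS c1 G1 e3
      using IH e1 e2 by (simp add: algebra_simps)
  next
    assume H: "(Suc N + s - 1) div s = (N + s - 1) div s"
    then have c1: "(Suc N + s - 1) div s = c" unfolding c_def by simp
    have e1: "x ^ (Suc N * d + a * c) = x ^ ((N + 1) * d + a * c)" by simp
    have e3: "x ^ ((Suc N + 1) * d + a * c) = x ^ d * x ^ (Suc N * d + a * c)"
    proof -
      have E: "(Suc N + 1) * d + a * c = d + (Suc N * d + a * c)" by (simp add: algebra_simps)
      show ?thesis unfolding E by (rule power_add)
    qed
    show ?case unfolding LS c1 e3 G_def[symmetric]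
      using IH e1 by (simp add: algebra_simps)
  qed
qed

lemma ceil_nat:
  fixes m s :: nat
  assumes s1: "1 \<le> s"
  shows "\<lceil>real m / real s\<rceil> = int ((m + s - 1) div s)"
proof -
  define P where "P = (m + s - 1) div s"
  have u: "m \<le> s * P" unfolding P_def using ceil_ge s1 by blast
  have "s * P \<le> m + s - 1" unfolding P_def by (rule times_div_less_eq_dividend)
  then have l: "s * P < m + s" using s1 by linarith
  have sp: "real s > 0" using s1 by simp
  have "real m / real s \<le> real P"
    using u sp by (simp add: divide_le_eq mult.commute flip: of_nat_mult)
  moreover have "real P - 1 < real m / real s"
  proof -
    have "real s * real P < real m + real s" using l by (simp flip: of_nat_mult of_nat_add)
    then have "(real P - 1) * real s < real m" by (simp add: algebra_simps)
    then show ?thesis using sp by (simp add: less_divide_eq)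
  qed
  ultimately show ?thesis unfolding P_def by (simp add: ceiling_eq_iff)
qed

lemma exp_series_complex:
  fixes w :: complex
  shows "(\<lambda>m. w ^ m / of_nat (fact m)) sums exp w"
proof -
  have "(\<lambda>m. w ^ m /\<^sub>R fact m) = (\<lambda>m. w ^ m / of_nat (fact m))"
    by (rule ext) (simp add: scaleR_conv_of_real divide_inverse mult.commute)
  then show ?thesis using exp_converges[of w] by simp
qed

lemma atom_alg:
  fixes p q r t D XP XQ :: complex
  assumes "p \<noteq> 0" "q \<noteq> 0" "r \<noteq> 0" "t \<noteq> 0"
  shows "((XP - 1 - D * q * ((XQ - 1) / r)) / p - 1 - (q / t - 1)) / q
    = (XP - 1) / (p * q) - D * (XQ - 1) / (p * r) - 1 / t"
  using assms by (simp add: field_simps)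

lemma final_alg:
  fixes x D A B XP XQ :: complex
  assumes d: "D - 1 \<noteq> 0" and a: "A - 1 \<noteq> 0" and b: "B - 1 \<noteq> 0" and x: "x - 1 \<noteq> 0" and D0: "D \<noteq> 0"
  shows "((XP - 1 - D * (A - 1) * ((XQ - 1) / (B - 1))) / (D - 1) - 1 - ((A - 1) / (x - 1) - 1)) / (A - 1)
    = (XP - 1) / ((D - 1) * (A - 1)) + (XQ - 1) / ((inverse D - 1) * (B - 1)) - 1 / (x - 1)"
proof -
  have i: "inverse D - 1 = (1 - D) / D" using D0 by (simp add: field_simps)
  have d': "1 - D \<noteq> 0" using d by (simp add: algebra_simps)
  have "(XQ - 1) / ((inverse D - 1) * (B - 1)) = - D * (XQ - 1) / ((D - 1) * (B - 1))"
  proof -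
    have f1: "(B - 1) * (D - 1) \<noteq> 0" using b d by simp
    have f2: "1 + B * D - (B + D) \<noteq> 0" using f1 by (simp add: algebra_simps)
    have f3: "B + D - (1 + B * D) \<noteq> 0" using f1 by (simp add: algebra_simps)
    show ?thesis unfolding i using D0 d d' b f2 f3 by (simp add: field_simps)
  qed
  moreover have "((XP - 1 - D * (A - 1) * ((XQ - 1) / (B - 1))) / (D - 1) - 1 - ((A - 1) / (x - 1) - 1)) / (A - 1)
    = (XP - 1) / ((D - 1) * (A - 1)) - D * (XQ - 1) / ((D - 1) * (B - 1)) - 1 / (x - 1)"
    using atom_alg[OF d a b x] .
  ultimately show ?thesis by simp
qed

theorem mainTheorem4:
  fixes a d s b :: nat and z :: complex
  assumes "a \<ge> 2" and "d \<ge> 1" and "coprime a d" and "1 \<le> s" and "s < a"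
    and "b = a + s * d"
    and "exp (of_nat d * z) \<noteq> 1" and "exp (of_nat a * z) \<noteq> 1"
    and "exp (- of_nat d * z) \<noteq> 1" and "exp (of_nat b * z) \<noteq> 1" and "exp z \<noteq> 1"
  shows "(\<Sum>m. of_nat (S a d s m) * z ^ m / of_nat (fact m)) =
     (exp (of_int \<lceil>real (b - 1) / real s\<rceil> * of_nat a * z) - 1)
        / ((exp (of_nat d * z) - 1) * (exp (of_nat a * z) - 1))
   + (exp (of_int \<lceil>real (a - 1) / real s\<rceil> * of_nat b * z) - 1)
        / ((exp (- of_nat d * z) - 1) * (exp (of_nat b * z) - 1))
   - 1 / (exp z - 1)"
proof -
  note a2 = assms(1) and cop = assms(3) and s1 = assms(4) and bdef = assms(6)
  define x where "x = exp z"
  have x0: "x \<noteq> 0" unfolding x_def by simp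
  define NN where "NN = NR a d s"
  define F where "F = (\<Sum>n\<in>NN. x ^ n)"
  define Q where "Q = (a - 1 + s - 1) div s"
  define P where "P = (b - 1 + s - 1) div s"
  define c where "c j = (j + s - 1) div s" for j
  define T1 where "T1 = (\<Sum>j\<in>{1..<a}. x ^ (j * d + a * c j))"
  define U where "U = (\<Sum>j\<in>{1..<a}. x ^ j)"
  define G where "G = (\<Sum>t<Q. x ^ (t * b))"
  have finNR: "finite NN" unfolding NN_def NR_eq[OF a2 cop s1] by simp
  have LHS: "(\<Sum>m. of_nat (S a d s m) * z ^ m / of_nat (fact m)) = F"
  proof -
    have "(\<lambda>m. of_nat (S a d s m) * z ^ m / of_nat (fact m)) = (\<lambda>m. \<Sum>n\<in>NN. (of_nat n * z) ^ m / of_nat (fact m))"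
      by (rule ext) (simp add: S_def NN_def of_nat_sum sum_divide_distrib sum_distrib_right power_mult_distrib)
    then have "(\<Sum>m. of_nat (S a d s m) * z ^ m / of_nat (fact m)) = (\<Sum>m. \<Sum>n\<in>NN. (of_nat n * z) ^ m / of_nat (fact m))"
      by simp
    also have "\<dots> = (\<Sum>n\<in>NN. \<Sum>m. (of_nat n * z) ^ m / of_nat (fact m))"
      by (rule suminf_sum) (rule sums_summable[OF exp_series_complex])
    also have "\<dots> = (\<Sum>n\<in>NN. exp (of_nat n * z))"
      by (rule sum.cong[OF refl]) (rule sums_unique[OF exp_series_complex, symmetric])
    also have "\<dots> = F" unfolding F_def x_def by (simp add: exp_of_nat_mult)
    finally show ?thesis .
  qed
  have PQ: "P = Q + d"
  proof -
    have "s * d = d * s" by (rule mult.commute)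
    define K where "K = a - 1 + s - 1"
    have e: "b - 1 + s - 1 = K + d * s" unfolding K_def using bdef a2 \<open>s * d = d * s\<close> by linarith
    have "P = (K + d * s) div s" unfolding P_def e ..
    also have "\<dots> = K div s + d" using s1 by simp
    finally show ?thesis unfolding Q_def K_def .
  qed
  have c1: "exp (of_int \<lceil>real (b - 1) / real s\<rceil> * of_nat a * z) = x ^ (a * d + a * Q)"
  proof -
    have "of_int \<lceil>real (b - 1) / real s\<rceil> * of_nat a * z = of_nat (a * d + a * Q) * z"
      unfolding ceil_nat[OF s1] P_def[symmetric] PQ by (simp add: algebra_simps)
    then show ?thesis unfolding x_def by (simp only: exp_of_nat_mult)
  qed
  have c2: "exp (of_int \<lceil>real (a - 1) / real s\<rceil> * of_nat b * z) = x ^ (Q * b)"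
  proof -
    have "of_int \<lceil>real (a - 1) / real s\<rceil> * of_nat b * z = of_nat (Q * b) * z"
      unfolding ceil_nat[OF s1] Q_def[symmetric] by simp
    then show ?thesis unfolding x_def by (simp only: exp_of_nat_mult)
  qed
  have ed: "exp (of_nat d * z) = x ^ d" unfolding x_def by (rule exp_of_nat_mult)
  have ea: "exp (of_nat a * z) = x ^ a" unfolding x_def by (rule exp_of_nat_mult)
  have eb: "exp (of_nat b * z) = x ^ b" unfolding x_def by (rule exp_of_nat_mult)
  have emd: "exp (- of_nat d * z) = inverse (x ^ d)"
    unfolding x_def by (simp add: exp_minus[symmetric] exp_of_nat_mult[symmetric])
  have nd: "x ^ d - 1 \<noteq> 0" using assms(7) ed by simp
  have na: "x ^ a - 1 \<noteq> 0" using assms(8) ea by simp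
  have nb: "x ^ b - 1 \<noteq> 0" using assms(10) eb by simp
  have nmd: "inverse (x ^ d) - 1 \<noteq> 0" using assms(9) emd by simp
  have n1: "x - 1 \<noteq> 0" using assms(11) unfolding x_def by simp
  have hF: "(x ^ a - 1) * F = T1 - U"
    unfolding F_def T1_def U_def NN_def c_def by (rule sum_NR[OF a2 cop s1])
  have hT: "(x ^ d - 1) * (1 + T1) = x ^ (a * d + a * Q) - 1 - x ^ d * (x ^ a - 1) * G"
  proof -
    have e: "{..a - 1} = insert 0 {1..<a}" using a2 by auto
    have "(\<Sum>j\<le>a - 1. x ^ (j * d + a * c j)) = 1 + T1"
      unfolding e T1_def using s1 by (simp add: c_def)
    moreover have "(a - 1 + 1) * d = a * d" using a2 by simp
    moreover have "b = a + s * d" by (rule bdef)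
    ultimately show ?thesis
      using T_ind[OF s1, of x d a "a - 1"] unfolding G_def Q_def c_def by (simp add: mult.commute)
  qed
  have hG: "(x ^ b - 1) * G = x ^ (Q * b) - 1"
  proof -
    have g: "G = (\<Sum>t<Q. (x ^ b) ^ t)" unfolding G_def
      by (rule sum.cong[OF refl]) (simp add: power_mult[symmetric] mult.commute)
    have A: "(x ^ b) ^ Q - 1 = (x ^ b - 1) * G" unfolding g by (rule power_diff_1_eq)
    have B: "(x ^ b) ^ Q = x ^ (Q * b)" by (simp add: power_mult[symmetric] mult.commute)
    have "x ^ (Q * b) - 1 = (x ^ b - 1) * G" using A unfolding B .
    then show ?thesis by (rule sym)
  qed
  have hU: "(x - 1) * (1 + U) = x ^ a - 1"
  proof -
    have e: "{..<a} = insert 0 {1..<a}" using a2 by auto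
    have "(\<Sum>j<a. x ^ j) = 1 + U" unfolding e U_def by simp
    then show ?thesis using power_diff_1_eq[of x a] by simp
  qed
  have F2: "F = (T1 - U) / (x ^ a - 1)"
    using hF na by (simp add: eq_divide_eq mult.commute)
  have T2: "1 + T1 = (x ^ (a * d + a * Q) - 1 - x ^ d * (x ^ a - 1) * G) / (x ^ d - 1)"
    using hT nd by (simp add: eq_divide_eq mult.commute)
  have U2: "1 + U = (x ^ a - 1) / (x - 1)"
    using hU n1 by (simp add: eq_divide_eq mult.commute)
  have G2: "G = (x ^ (Q * b) - 1) / (x ^ b - 1)"
    using hG nb by (simp add: eq_divide_eq mult.commute)
  have T3: "T1 = (x ^ (a * d + a * Q) - 1 - x ^ d * (x ^ a - 1) * G) / (x ^ d - 1) - 1"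
    using T2 by (simp add: algebra_simps)
  have U3: "U = (x ^ a - 1) / (x - 1) - 1"
    using U2 by (simp add: algebra_simps)
  have "F = (x ^ (a * d + a * Q) - 1) / ((x ^ d - 1) * (x ^ a - 1))
      + (x ^ (Q * b) - 1) / ((inverse (x ^ d) - 1) * (x ^ b - 1)) - 1 / (x - 1)"
    unfolding F2 T3 U3 G2 by (rule final_alg[OF nd na nb n1]) (simp add: x0)
  then show ?thesis unfolding LHS c1 c2 ed ea eb emd x_def[symmetric] .
qed

end
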